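(* Let $\ell$ be a prime, $\nu\ge1$, and $R$ a $\mathbb{Z}/\ell^\nu$-algebra. Let $L'$ be the free $R$-module with basis $\alpha_0,\alpha_1,\dots,\alpha_{\ell-1}$ and $L\subseteq L'$ the submodule spanned by $\alpha_1,\dots,\alpha_{\ell-1}$. For $k\ge0$ define $b_k:L'\to L'$ by $b_k(\alpha_i)=(k\ell+i)\alpha_i+(k\ell+i+1)\alpha_{i+1}$ for $0\le i\le \ell-2$ and $b_k(\alpha_{\ell-1})=(k\ell+\ell-1)\alpha_{\ell-1}$ (so $b_k(L)\subseteq L$). Then for every $k\ge0$ the natural maps $L\to L[1/b_k]\to L'[1/b_k]$ are isomorphisms, where $M[1/b_k]$ denotes the colimit of $M\xrightarrow{b_k}M\xrightarrow{b_k}M\to\cdots$. *)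

theory Defs
  imports "HOL-Computational_Algebra.Primes"
begin

text \<open>Elements of the free R-module L' with basis alpha_0..alpha_(l-1) are represented
  by their coefficient functions nat => R, vanishing from index l on.\<close>

definition alpha :: "nat \<Rightarrow> nat \<Rightarrow> 'a::comm_ring_1" where
  "alpha i = (\<lambda>j. if j = i then 1 else 0)"

definition Lprime :: "nat \<Rightarrow> (nat \<Rightarrow> 'a::comm_ring_1) set" where
  "Lprime l = {f. \<forall>j\<ge>l. f j = 0}"

definition Lsub :: "nat \<Rightarrow> (nat \<Rightarrow> 'a::comm_ring_1) set" where
  "Lsub l = {f. f \<in> Lprime l \<and> f 0 = 0}"

definition bimg :: "nat \<Rightarrow> nat \<Rightarrow> nat \<Rightarrow> nat \<Rightarrow> 'a::comm_ring_1" where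
  "bimg l k i = (if i + 2 \<le> l
      then (\<lambda>j. of_nat (k*l + i) * alpha i j + of_nat (k*l + i + 1) * alpha (i+1) j)
      else (\<lambda>j. of_nat (k*l + l - 1) * alpha (l - 1) j))"

definition bmap :: "nat \<Rightarrow> nat \<Rightarrow> (nat \<Rightarrow> 'a::comm_ring_1) \<Rightarrow> (nat \<Rightarrow> 'a)" where
  "bmap l k f = (\<lambda>j. \<Sum>i<l. f i * bimg l k i j)"

text \<open>Colimit M[1/g] of M --g--> M --g--> M --> ...: pairs (n,x) (x in the n-th copy),
  with (n,x) ~ (m,y) iff they become equal in some later copy.\<close>
definition dirlim_rel :: "'m set \<Rightarrow> ('m \<Rightarrow> 'm) \<Rightarrow> ((nat \<times> 'm) \<times> (nat \<times> 'm)) set" where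
  "dirlim_rel M g = {((n,x),(m,y)). x \<in> M \<and> y \<in> M \<and>
      (\<exists>N. n \<le> N \<and> m \<le> N \<and> (g ^^ (N - n)) x = (g ^^ (N - m)) y)}"

definition dirlim :: "'m set \<Rightarrow> ('m \<Rightarrow> 'm) \<Rightarrow> (nat \<times> 'm) set set" where
  "dirlim M g = (UNIV \<times> M) // dirlim_rel M g"

definition dirlim_in :: "'m set \<Rightarrow> ('m \<Rightarrow> 'm) \<Rightarrow> 'm \<Rightarrow> (nat \<times> 'm) set" where
  "dirlim_in M g x = dirlim_rel M g `` {(0, x)}"

text \<open>Natural map M[1/g] -> M'[1/g] induced by an inclusion M \<subseteq> M' (g-stable):
  the class of (n,x) goes to the class of (n,x).\<close>
definition dirlim_incl :: "'m set \<Rightarrow> ('m \<Rightarrow> 'm) \<Rightarrow> (nat \<times> 'm) set \<Rightarrow> (nat \<times> 'm) set" where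
  "dirlim_incl M' g A = dirlim_rel M' g `` A"

end

theory Submission
  imports Defs
begin

lemma fp: "(g^^a) ((g^^b) x) = (g^^(a+b)) x"
  by (simp add: funpow_add)

lemma rel_equiv: "equiv (UNIV \<times> M) (dirlim_rel M g)"
proof -
  have t: "((a,b),(e,f)) \<in> dirlim_rel M g"
    if "((a,b),(c,d)) \<in> dirlim_rel M g" "((c,d),(e,f)) \<in> dirlim_rel M g" for a b c d e f
  proof -
    from that obtain N1 N2 where h: "b \<in> M" "d \<in> M" "f \<in> M" "a \<le> N1" "c \<le> N1"
      "(g^^(N1-a)) b = (g^^(N1-c)) d" "c \<le> N2" "e \<le> N2" "(g^^(N2-c)) d = (g^^(N2-e)) f"
      unfolding dirlim_rel_def by auto
    define N where "N = max N1 N2"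
    have e1: "N-a = (N-N1)+(N1-a)" "N-c = (N-N1)+(N1-c)" "N-c = (N-N2)+(N2-c)"
      "N-e = (N-N2)+(N2-e)" using h by (auto simp: N_def)
    have "(g^^(N-a)) b = (g^^(N-N1)) ((g^^(N1-a)) b)" by (subst e1(1), simp add: fp)
    also have "\<dots> = (g^^(N-c)) d" using h by (subst e1(2), simp add: fp)
    also have "\<dots> = (g^^(N-N2)) ((g^^(N2-c)) d)" by (subst e1(3), simp add: fp)
    also have "\<dots> = (g^^(N-e)) f" using h by (subst e1(4), simp add: fp)
    finally show ?thesis using h unfolding dirlim_rel_def N_def
      by (intro CollectI, simp) (rule exI[of _ "max N1 N2"], auto)
  qed
  show ?thesis
    unfolding equiv_def refl_on_def sym_def trans_def
    apply (intro conjI)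
      apply (auto simp: dirlim_rel_def)[3]
    using t by auto
qed

lemma bij_funpow: "bij_betw g M M \<Longrightarrow> bij_betw (g^^n) M M"
proof (induction n)
  case 0 then show ?case by (simp add: bij_betw_def)
next
  case (Suc n)
  have "g^^Suc n = (g^^n) \<circ> g" by (rule funpow_Suc_right)
  then show ?case using Suc bij_betw_trans by metis
qed

lemma abs_in:
  assumes "bij_betw g M M"
  shows "bij_betw (dirlim_in M g) M (dirlim M g)"
proof -
  have E: "equiv (UNIV \<times> M) (dirlim_rel M g)" by (rule rel_equiv)
  have inj: "inj_on (dirlim_in M g) M"
  proof (rule inj_onI)
    fix x y assume xy: "x \<in> M" "y \<in> M" "dirlim_in M g x = dirlim_in M g y"
    then have "((0,x),(0,y)) \<in> dirlim_rel M g"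
      using eq_equiv_class_iff[OF E] unfolding dirlim_in_def by auto
    then obtain N where "(g^^N) x = (g^^N) y" unfolding dirlim_rel_def by auto
    then show "x = y" using bij_funpow[OF assms, of N] xy
      by (meson bij_betw_def inj_onD)
  qed
  have img: "dirlim_in M g ` M = dirlim M g"
  proof
    show "dirlim_in M g ` M \<subseteq> dirlim M g"
      unfolding dirlim_in_def dirlim_def by (auto intro: quotientI)
  next
    show "dirlim M g \<subseteq> dirlim_in M g ` M"
    proof
      fix X assume "X \<in> dirlim M g"
      then obtain n x where X: "X = dirlim_rel M g `` {(n,x)}" "x \<in> M"
        unfolding dirlim_def by (auto elim: quotientE)
      have "x \<in> (g^^n) ` M"
        using bij_funpow[OF assms, of n] X(2) unfolding bij_betw_def by auto
      then obtain y where y: "y \<in> M" "(g^^n) y = x" by blast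
      have "((0,y),(n,x)) \<in> dirlim_rel M g"
        unfolding dirlim_rel_def using y X by auto
      then have "dirlim_rel M g``{(0,y)} = X"
        using eq_equiv_class_iff[OF E, of "(0,y)" "(n,x)"] X y by simp
      then have "X = dirlim_in M g y" unfolding dirlim_in_def by simp
      then show "X \<in> dirlim_in M g ` M" using y by auto
    qed
  qed
  show ?thesis using inj img by (simp add: bij_betw_def)
qed

lemma abs_incl:
  assumes sub: "M \<subseteq> M'" and nil: "\<And>x. x \<in> M' \<Longrightarrow> (g^^v) x \<in> M"
  shows "bij_betw (dirlim_incl M' g) (dirlim M g) (dirlim M' g)"
proof -
  have E: "equiv (UNIV \<times> M) (dirlim_rel M g)" by (rule rel_equiv)
  have E': "equiv (UNIV \<times> M') (dirlim_rel M' g)" by (rule rel_equiv)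
  have rsub: "dirlim_rel M g \<subseteq> dirlim_rel M' g"
    using sub unfolding dirlim_rel_def by auto
  have cl: "dirlim_incl M' g (dirlim_rel M g `` {(n,x)}) = dirlim_rel M' g `` {(n,x)}"
    if "x \<in> M" for n x
  proof -
    have a: "(n,x) \<in> dirlim_rel M g `` {(n,x)}"
      using equiv_class_self[OF E] that by auto
    have tr: "trans (dirlim_rel M' g)" using E' by (simp add: equiv_def)
    show ?thesis unfolding dirlim_incl_def
      using a rsub tr by (auto dest: transD)
  qed
  have inj: "inj_on (dirlim_incl M' g) (dirlim M g)"
  proof (rule inj_onI)
    fix X Y assume XY: "X \<in> dirlim M g" "Y \<in> dirlim M g" "dirlim_incl M' g X = dirlim_incl M' g Y"
    obtain n x where X: "X = dirlim_rel M g `` {(n,x)}" "x \<in> M"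
      using XY(1) unfolding dirlim_def by (auto elim: quotientE)
    obtain m y where Y: "Y = dirlim_rel M g `` {(m,y)}" "y \<in> M"
      using XY(2) unfolding dirlim_def by (auto elim: quotientE)
    have "dirlim_rel M' g `` {(n,x)} = dirlim_rel M' g `` {(m,y)}"
      using XY(3) cl X Y by simp
    moreover have "x \<in> M'" "y \<in> M'" using X Y sub by auto
    ultimately have "((n,x),(m,y)) \<in> dirlim_rel M' g"
      using eq_equiv_class_iff[OF E', of "(n,x)" "(m,y)"] by simp
    then have "((n,x),(m,y)) \<in> dirlim_rel M g"
      using X Y unfolding dirlim_rel_def by auto
    then show "X = Y" using eq_equiv_class_iff[OF E] X Y by auto
  qed
  have img: "dirlim_incl M' g ` dirlim M g = dirlim M' g"
  proof
    show "dirlim_incl M' g ` dirlim M g \<subseteq> dirlim M' g"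
    proof
      fix Z assume "Z \<in> dirlim_incl M' g ` dirlim M g"
      then obtain n x where "Z = dirlim_incl M' g (dirlim_rel M g `` {(n,x)})" "x \<in> M"
        unfolding dirlim_def by (auto elim: quotientE)
      then show "Z \<in> dirlim M' g" using cl sub unfolding dirlim_def
        by (auto intro: quotientI)
    qed
  next
    show "dirlim M' g \<subseteq> dirlim_incl M' g ` dirlim M g"
    proof
      fix Z assume "Z \<in> dirlim M' g"
      then obtain n x where Z: "Z = dirlim_rel M' g `` {(n,x)}" "x \<in> M'"
        unfolding dirlim_def by (auto elim: quotientE)
      define y where "y = (g^^v) x"
      have y: "y \<in> M" using nil Z y_def by auto
      have "((n+v,y),(n,x)) \<in> dirlim_rel M' g"
        unfolding dirlim_rel_def using y sub Z y_def
        by (auto intro!: exI[of _ "n+v"])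
      moreover have "y \<in> M'" using y sub by auto
      ultimately have "Z = dirlim_rel M' g `` {(n+v,y)}"
        using eq_equiv_class_iff[OF E', of "(n+v,y)" "(n,x)"] Z by simp
      also have "\<dots> = dirlim_incl M' g (dirlim_rel M g `` {(n+v,y)})"
        using cl y by simp
      finally show "Z \<in> dirlim_incl M' g ` dirlim M g"
        using y unfolding dirlim_def by (auto intro: quotientI)
    qed
  qed
  show ?thesis using inj img by (simp add: bij_betw_def)
qed

lemma bimg_eq: "i < l \<Longrightarrow> bimg l k i j = (if j = i then of_nat(k*l+i) else 0)
   + (if j = i+1 \<and> j < l then of_nat(k*l+i+1) else (0::'a::comm_ring_1))"
  by (cases "i+2 \<le> l") (auto simp: bimg_def alpha_def)

lemma bmap_eq: "bmap l k f j = (if j < l then of_nat(k*l+j) * f j else 0)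
   + (if 0 < j \<and> j < l then of_nat(k*l+j) * f (j-1) else (0::'a::comm_ring_1))"
proof -
  have "bmap l k f j = (\<Sum>i<l. (if i = j then of_nat(k*l+j) * f j else 0)
     + (if 0 < j \<and> j < l then (if i = j - 1 then of_nat(k*l+j) * f (j-1) else 0) else 0))"
    unfolding bmap_def by (rule sum.cong) (auto simp: bimg_eq algebra_simps)
  also have "\<dots> = (if j < l then of_nat(k*l+j) * f j else 0)
   + (if 0 < j \<and> j < l then of_nat(k*l+j) * f (j-1) else (0::'a::comm_ring_1))"
    by (auto simp: sum.distrib)
  finally show ?thesis .
qed

fun preim :: "(nat \<Rightarrow> 'a::comm_ring_1) \<Rightarrow> (nat \<Rightarrow> 'a) \<Rightarrow> nat \<Rightarrow> nat \<Rightarrow> 'a" where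
  "preim u h l 0 = 0"
| "preim u h l (Suc j) = (if Suc j < l then u (Suc j) * h (Suc j) - preim u h l j else 0)"

lemma Lsub_iff: "f \<in> Lsub l \<longleftrightarrow> (\<forall>j\<ge>l. f j = 0) \<and> f 0 = 0"
  by (auto simp: Lsub_def Lprime_def)

lemma unit_ex:
  assumes "prime l" "0 < j" "j < l" "(of_nat (l ^ v) :: 'a::comm_ring_1) = 0"
  shows "\<exists>u. of_nat(k*l+j) * u = (1::'a)"
proof -
  have nd: "\<not> l dvd (k*l+j)"
  proof
    assume "l dvd k*l+j"
    then have "l dvd j" by (simp add: dvd_add_right_iff)
    then show False using assms by (auto dest: dvd_imp_le)
  qed
  have "coprime l (k*l+j)" using prime_imp_coprime[OF assms(1) nd] .
  then have "coprime (k*l+j) (l^v)" by (simp add: coprime_commute)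
  then have g: "gcd (k*l+j) (l^v) = 1" by simp
  obtain x y where "(k*l+j) * x = l^v * y + gcd (k*l+j) (l^v)"
    using bezout_nat[of "k*l+j" "l^v"] assms by auto
  then have "(k*l+j) * x = l^v * y + 1" using g by simp
  then have "(of_nat ((k*l+j) * x) :: 'a) = of_nat (l^v * y + 1)" by simp
  then have "of_nat(k*l+j) * (of_nat x :: 'a) = 1"
    using assms(4) by (simp only: of_nat_mult of_nat_add) simp
  then show ?thesis by blast
qed

theorem lemma2p3:
  fixes l \<nu> k :: nat
  assumes "prime l" and "\<nu> \<ge> 1"
    and "(of_nat (l ^ \<nu>) :: 'a::comm_ring_1) = 0"
  shows "bmap l k ` (Lsub l :: (nat \<Rightarrow> 'a) set) \<subseteq> Lsub l
    \<and> bij_betw (dirlim_in (Lsub l) (bmap l k))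
         (Lsub l :: (nat \<Rightarrow> 'a) set) (dirlim (Lsub l) (bmap l k))
    \<and> bij_betw (dirlim_incl (Lprime l) (bmap l k))
         (dirlim (Lsub l :: (nat \<Rightarrow> 'a) set) (bmap l k)) (dirlim (Lprime l) (bmap l k))"
proof -
  have l2: "l \<ge> 2" using assms(1) prime_ge_2_nat by blast
  define c :: "nat \<Rightarrow> 'a" where "c j = of_nat(k*l+j)" for j
  define u where "u j = (SOME u. c j * u = 1)" for j
  have cu: "c j * u j = 1" if "0 < j" "j < l" for j
    unfolding u_def c_def using unit_ex[OF assms(1) that assms(3), of k] by (rule someI_ex)
  have bm: "bmap l k f j = (if j < l then c j * f j else 0)
     + (if 0 < j \<and> j < l then c j * f (j-1) else 0)" for f :: "nat \<Rightarrow> 'a" and j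
    unfolding c_def by (rule bmap_eq)
  have sub: "bmap l k ` (Lsub l :: (nat \<Rightarrow> 'a) set) \<subseteq> Lsub l"
    by (auto simp: Lsub_iff bm)
  have inj: "inj_on (bmap l k) (Lsub l :: (nat \<Rightarrow> 'a) set)"
  proof (rule inj_onI)
    fix f g :: "nat \<Rightarrow> 'a" assume fg: "f \<in> Lsub l" "g \<in> Lsub l" "bmap l k f = bmap l k g"
    have "f j = g j" for j
    proof (induction j)
      case 0 then show ?case using fg by (simp add: Lsub_iff)
    next
      case (Suc j)
      show ?case
      proof (cases "Suc j < l")
        case True
        have "c (Suc j) * f (Suc j) + c (Suc j) * f j = c (Suc j) * g (Suc j) + c (Suc j) * g j"
          using fun_cong[OF fg(3), of "Suc j"] True by (simp add: bm)
        then have "c (Suc j) * f (Suc j) = c (Suc j) * g (Suc j)" using Suc by simp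
        then have "u (Suc j) * (c (Suc j) * f (Suc j)) = u (Suc j) * (c (Suc j) * g (Suc j))" by simp
        then show ?thesis using cu[of "Suc j"] True
          by (simp add: mult.assoc[symmetric] mult.commute[of "u _"])
      next
        case False then show ?thesis using fg by (simp add: Lsub_iff)
      qed
    qed
    then show "f = g" by auto
  qed
  have surj: "Lsub l \<subseteq> bmap l k ` (Lsub l :: (nat \<Rightarrow> 'a) set)"
  proof
    fix h :: "nat \<Rightarrow> 'a" assume h: "h \<in> Lsub l"
    let ?p = "preim u h l"
    have pL: "?p \<in> Lsub l" unfolding Lsub_iff
    proof (intro conjI allI impI)
      fix j assume "l \<le> j"
      then show "?p j = 0" using l2 by (cases j) auto
    qed simp
    have "bmap l k ?p j = h j" for j
    proof (cases j)
      case 0 then show ?thesis using h by (simp add: bm Lsub_iff)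
    next
      case (Suc i)
      show ?thesis
      proof (cases "j < l")
        case True
        have "bmap l k ?p j = c j * (u j * h j - ?p i) + c j * ?p i"
          using True Suc by (simp add: bm)
        also have "\<dots> = (c j * u j) * h j" by (simp add: algebra_simps)
        also have "\<dots> = h j" using cu[of j] True Suc by simp
        finally show ?thesis .
      next
        case False then show ?thesis using h by (simp add: bm Lsub_iff)
      qed
    qed
    then have "bmap l k ?p = h" by auto
    then show "h \<in> bmap l k ` Lsub l" using pL by (metis imageI)
  qed
  have bij: "bij_betw (bmap l k) (Lsub l :: (nat \<Rightarrow> 'a) set) (Lsub l)"
    using inj sub surj by (auto simp: bij_betw_def)
  have presP: "bmap l k f \<in> Lprime l" for f :: "nat \<Rightarrow> 'a"
    by (auto simp: Lprime_def bm)
  have it0: "((bmap l k)^^n) f 0 = c 0 ^ n * f 0" for n and f :: "nat \<Rightarrow> 'a"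
    using l2 by (induction n) (auto simp: bm)
  have c0: "c 0 ^ \<nu> = 0"
  proof -
    have "c 0 ^ \<nu> = of_nat (k^\<nu>) * of_nat (l^\<nu>)"
      by (simp add: c_def power_mult_distrib)
    then show ?thesis using assms(3) by simp
  qed
  have nil: "((bmap l k)^^\<nu>) f \<in> Lsub l" if "f \<in> Lprime l" for f :: "nat \<Rightarrow> 'a"
  proof -
    obtain m where m: "\<nu> = Suc m" using assms(2) by (cases \<nu>) auto
    have "((bmap l k)^^\<nu>) f \<in> Lprime l" unfolding m by (simp add: presP)
    then show ?thesis using it0[of \<nu> f] c0 by (simp add: Lsub_def)
  qed
  have LL: "(Lsub l :: (nat \<Rightarrow> 'a) set) \<subseteq> Lprime l" by (auto simp: Lsub_def)
  show ?thesis
    using sub abs_in[OF bij] abs_incl[OF LL nil] by blast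
qed

end
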